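(* Let $u \in \mathbb{R}^m$, let $T$ be a finite set of vectors in $\mathbb{R}^m$, and let $S = \{v_1, \dots, v_k\}$ be a set of unit vectors in $\mathbb{R}^m$ with $f_u(S) \ge f_u(T)$ and $f_u(S) > 0$. Then $$\sum_{i=1}^k \big(f_u(T \cup \{v_i\}) - f_u(T)\big) \ge \sigma_{\min}(S)\, \frac{\big(f_u(S) - f_u(T)\big)^2}{4 f_u(S)}.$$
   Context: For a finite set $V$ of vectors in $\mathbb{R}^m$, $\Pi_V$ denotes the orthogonal projector onto $\mathrm{span}(V)$, and for $u \in \mathbb{R}^m$, $f_u(V) = \|\Pi_V u\|_2^2$. For a finite set $V$ of unit vectors, $\sigma_{\min}(V)$ is the smallest squared singular value of the matrix with columns $V$, i.e. $\inf_{\|x\|_2 = 1} \|Mx\|_2^2$ for that matrix $M$. *)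

theory Defs
  imports "HOL-Analysis.Analysis"
begin

definition proj_span :: "'a::euclidean_space set \<Rightarrow> 'a \<Rightarrow> 'a" where
  "proj_span V u = (THE p. p \<in> span V \<and> (\<forall>w\<in>span V. (u - p) \<bullet> w = 0))"

definition f_val :: "'a::euclidean_space \<Rightarrow> 'a set \<Rightarrow> real" where
  "f_val u V = (norm (proj_span V u))\<^sup>2"

text \<open>Smallest squared singular value of the matrix whose columns are the elements of V
  (columns indexed by V itself; coefficient vectors x restricted to V).\<close>
definition sigma_min :: "'a::euclidean_space set \<Rightarrow> real" where
  "sigma_min V = Inf {(norm (\<Sum>v\<in>V. x v *\<^sub>R v))\<^sup>2 | x. (\<Sum>v\<in>V. (x v)\<^sup>2) = 1}"

end

theory Submission
  imports Defs
begin

lemma proj_char: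
  fixes V :: "'a::euclidean_space set"
  shows "proj_span V u \<in> span V \<and> (\<forall>w\<in>span V. (u - proj_span V u) \<bullet> w = 0)"
proof -
  obtain y z where y: "y \<in> span V" and z: "\<And>w. w \<in> span V \<Longrightarrow> orthogonal z w" and e: "u = y + z"
    using orthogonal_subspace_decomp_exists by blast
  have ex: "y \<in> span V \<and> (\<forall>w\<in>span V. (u - y) \<bullet> w = 0)"
    using y z e by (simp add: orthogonal_def)
  have un: "p = y" if "p \<in> span V \<and> (\<forall>w\<in>span V. (u - p) \<bullet> w = 0)" for p
  proof -
    have d: "p - y \<in> span V" using that y span_diff by blast
    have "(u - p) \<bullet> (p - y) = 0" "(u - y) \<bullet> (p - y) = 0" using that ex d by auto
    then have "(p - y) \<bullet> (p - y) = 0" by (simp add: inner_diff_left)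
    then show ?thesis by simp
  qed
  have "proj_span V u = y" unfolding proj_span_def
    by (rule the_equality[of "\<lambda>p. p \<in> span V \<and> (\<forall>w\<in>span V. (u - p) \<bullet> w = 0)" y, OF ex un])
  then show ?thesis using ex by simp
qed

lemma proj_in: "proj_span V u \<in> span V"
  using proj_char by blast

lemma proj_orth: "w \<in> span V \<Longrightarrow> (u - proj_span V u) \<bullet> w = 0"
  using proj_char by blast

lemma proj_norm: "(norm (proj_span V u))\<^sup>2 = u \<bullet> proj_span V u"
proof -
  have "(u - proj_span V u) \<bullet> proj_span V u = 0" by (rule proj_orth[OF proj_in])
  then show ?thesis by (simp add: inner_diff_left power2_norm_eq_inner)
qed

lemma gain:
  fixes u v :: "'a::euclidean_space"
  assumes "norm v = 1"
  shows "f_val u (T \<union> {v}) - f_val u T \<ge> ((u - proj_span T u) \<bullet> v)\<^sup>2"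
proof -
  define p where "p = proj_span T u"
  define p' where "p' = proj_span (T \<union> {v}) u"
  have sub: "span T \<subseteq> span (T \<union> {v})" by (rule span_mono) blast
  have pin: "p \<in> span (T \<union> {v})" using proj_in sub p_def by blast
  have vin: "v \<in> span (T \<union> {v})" by (simp add: span_base)
  have o1: "(u - p') \<bullet> p = 0" using proj_orth[OF pin] p'_def by simp
  have o2: "(u - p) \<bullet> p = 0" using proj_orth[OF proj_in] p_def by simp
  have o3: "(u - p') \<bullet> v = 0" using proj_orth[OF vin] p'_def by simp
  have opp: "(p' - p) \<bullet> p = 0"
  proof -
    have "p' - p = (u - p) - (u - p')" by simp
    then show ?thesis using o1 o2 by (simp add: inner_diff_left)
  qed
  have pyth: "(norm p')\<^sup>2 = (norm p)\<^sup>2 + (norm (p' - p))\<^sup>2"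
  proof -
    have "p' = (p' - p) + p" by simp
    then have "(norm p')\<^sup>2 = (norm ((p' - p) + p))\<^sup>2" by simp
    also have "\<dots> = (norm (p' - p))\<^sup>2 + (norm p)\<^sup>2"
      using opp by (simp add: power2_norm_eq_inner inner_add_left inner_add_right inner_diff_left inner_diff_right inner_commute)
    finally show ?thesis by simp
  qed
  have rv: "(u - p) \<bullet> v = (p' - p) \<bullet> v"
  proof -
    have "u - p = (p' - p) + (u - p')" by simp
    then show ?thesis using o3 by (metis add.right_neutral inner_add_left)
  qed
  have "((p' - p) \<bullet> v)\<^sup>2 \<le> (norm (p' - p))\<^sup>2"
  proof -
    have "\<bar>(p' - p) \<bullet> v\<bar> \<le> norm (p' - p) * norm v" by (rule Cauchy_Schwarz_ineq2)
    then have "\<bar>(p' - p) \<bullet> v\<bar> \<le> norm (p' - p)" using assms by simp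
    then show ?thesis by (metis abs_ge_zero power2_abs power_mono)
  qed
  then show ?thesis unfolding f_val_def using pyth rv p_def p'_def by simp
qed

lemma sigma_bound:
  fixes S :: "'a::euclidean_space set"
  assumes "finite S"
  shows "sigma_min S * (\<Sum>v\<in>S. (x v)\<^sup>2) \<le> (norm (\<Sum>v\<in>S. x v *\<^sub>R v))\<^sup>2"
proof (cases "(\<Sum>v\<in>S. (x v)\<^sup>2) = 0")
  case True then show ?thesis by simp
next
  case False
  define s where "s = (\<Sum>v\<in>S. (x v)\<^sup>2)"
  have spos: "s > 0" using False s_def by (metis sum_nonneg zero_le_power2 order_le_less)
  define c where "c = sqrt s"
  have cpos: "c > 0" using spos c_def by simp
  have c2: "c\<^sup>2 = s" using spos c_def by simp
  define y where "y = (\<lambda>v. x v / c)"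
  have "(\<Sum>v\<in>S. (y v)\<^sup>2) = (\<Sum>v\<in>S. (x v)\<^sup>2) / c\<^sup>2"
    by (simp add: y_def power_divide sum_divide_distrib)
  then have y1: "(\<Sum>v\<in>S. (y v)\<^sup>2) = 1" using c2 s_def spos by simp
  have "sigma_min S \<le> (norm (\<Sum>v\<in>S. y v *\<^sub>R v))\<^sup>2"
    unfolding sigma_min_def
    by (rule cInf_lower) (use y1 in \<open>auto intro!: bdd_belowI[of _ 0]\<close>)
  also have "(\<Sum>v\<in>S. y v *\<^sub>R v) = (1/c) *\<^sub>R (\<Sum>v\<in>S. x v *\<^sub>R v)"
    by (simp add: y_def scaleR_sum_right divide_inverse_commute)
  also have "(norm \<dots>)\<^sup>2 = (norm (\<Sum>v\<in>S. x v *\<^sub>R v))\<^sup>2 / s"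
    using cpos c2 by (simp add: power_divide)
  finally have "sigma_min S \<le> (norm (\<Sum>v\<in>S. x v *\<^sub>R v))\<^sup>2 / s" .
  then show ?thesis using spos s_def by (simp add: pos_le_divide_eq)
qed

lemma sigma_nonneg:
  fixes S :: "'a::euclidean_space set"
  assumes "S \<noteq> {}" "finite S"
  shows "sigma_min S \<ge> 0"
proof -
  obtain v0 where v0: "v0 \<in> S" using assms by blast
  define x0 where "x0 = (\<lambda>v. if v = v0 then 1 else (0::real))"
  have "(\<Sum>v\<in>S. (x0 v)\<^sup>2) = (\<Sum>v\<in>S. if v = v0 then 1 else 0)"
    by (rule sum.cong) (auto simp: x0_def)
  also have "\<dots> = 1" using sum.delta[OF assms(2), of v0 "\<lambda>_. (1::real)"] v0 by simp
  finally have ne: "{(norm (\<Sum>v\<in>S. x v *\<^sub>R v))\<^sup>2 | x. (\<Sum>v\<in>S. (x v)\<^sup>2) = 1} \<noteq> {}"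
    by blast
  show ?thesis unfolding sigma_min_def
    by (rule cInf_greatest[OF ne]) auto
qed

theorem lemma2:
  fixes u :: "'a::euclidean_space" and T S :: "'a set"
  assumes "finite T" and "finite S"
    and "\<forall>v\<in>S. norm v = 1"
    and "f_val u S \<ge> f_val u T"
    and "f_val u S > 0"
  shows "(\<Sum>v\<in>S. f_val u (T \<union> {v}) - f_val u T)
           \<ge> sigma_min S * (f_val u S - f_val u T)\<^sup>2 / (4 * f_val u S)"
proof -
  define p where "p = proj_span T u"
  define q where "q = proj_span S u"
  define r where "r = u - p"
  define F where "F = f_val u S"
  define G where "G = f_val u T"
  define A where "A = (\<Sum>v\<in>S. (r \<bullet> v)\<^sup>2)"
  have SA: "(\<Sum>v\<in>S. f_val u (T \<union> {v}) - f_val u T) \<ge> A"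
    unfolding A_def r_def p_def by (rule sum_mono) (use assms(3) gain in auto)
  have Sne: "S \<noteq> {}"
  proof
    assume "S = {}"
    then have "q = 0" using proj_in[of S u] q_def by simp
    then show False using assms(5) q_def by (simp add: f_val_def)
  qed
  have sig: "sigma_min S \<ge> 0" by (rule sigma_nonneg[OF Sne assms(2)])
  obtain x where qx: "q = (\<Sum>v\<in>S. x v *\<^sub>R v)"
    using proj_in[of S u] q_def span_finite[OF assms(2)] by auto
  have F: "F = (norm q)\<^sup>2" "G = (norm p)\<^sup>2" using F_def G_def q_def p_def f_val_def by auto
  have uq: "u \<bullet> q = F" using proj_norm[of S u] F q_def by simp
  have rq: "r \<bullet> q = (\<Sum>v\<in>S. x v * (r \<bullet> v))"
    unfolding qx by (simp add: inner_sum_right)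
  have cs: "(r \<bullet> q)\<^sup>2 \<le> (\<Sum>v\<in>S. (x v)\<^sup>2) * A"
    unfolding rq A_def by (rule Cauchy_Schwarz_ineq_sum)
  have sb: "sigma_min S * (\<Sum>v\<in>S. (x v)\<^sup>2) \<le> F"
    using sigma_bound[OF assms(2), of x] F qx by simp
  have key: "sigma_min S * (r \<bullet> q)\<^sup>2 \<le> F * A"
  proof -
    have "sigma_min S * (r \<bullet> q)\<^sup>2 \<le> sigma_min S * ((\<Sum>v\<in>S. (x v)\<^sup>2) * A)"
      by (rule mult_left_mono[OF cs sig])
    also have "\<dots> = (sigma_min S * (\<Sum>v\<in>S. (x v)\<^sup>2)) * A" by simp
    also have "\<dots> \<le> F * A"
      using sb by (rule mult_right_mono) (simp add: A_def sum_nonneg)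
    finally show ?thesis .
  qed
  have pq: "p \<bullet> q \<le> (F + G) / 2"
  proof -
    have "0 \<le> (norm (p - q))\<^sup>2" by simp
    also have "(norm (p - q))\<^sup>2 = G + F - 2 * (p \<bullet> q)"
      using F by (simp add: power2_norm_eq_inner inner_diff_left inner_diff_right inner_commute)
    finally show ?thesis by simp
  qed
  have rq2: "r \<bullet> q \<ge> (F - G) / 2"
    using pq uq by (simp add: r_def inner_diff_left)
  have FG: "F - G \<ge> 0" using assms(4) F_def G_def by simp
  have Fp: "F > 0" using assms(5) F_def by simp
  have "((F - G) / 2)\<^sup>2 \<le> (r \<bullet> q)\<^sup>2"
    using rq2 FG by (intro power_mono) auto
  then have "sigma_min S * ((F - G) / 2)\<^sup>2 \<le> sigma_min S * (r \<bullet> q)\<^sup>2"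
    by (rule mult_left_mono[OF _ sig])
  then have k2: "sigma_min S * ((F - G) / 2)\<^sup>2 \<le> F * A"
    using key by linarith
  have e: "sigma_min S * (F - G)\<^sup>2 / (4 * F) = (sigma_min S * ((F - G) / 2)\<^sup>2) / F"
    by (simp add: power_divide)
  have "(sigma_min S * ((F - G) / 2)\<^sup>2) / F \<le> (F * A) / F"
    using k2 by (rule divide_right_mono) (use Fp in simp)
  then have "sigma_min S * (F - G)\<^sup>2 / (4 * F) \<le> A"
    using Fp e by simp
  then show ?thesis using SA F_def G_def by simp
qed

end
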